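(* For every integer $n\ge 0$, \[ \sum_{k=0}^{n}(-4)^k\frac{\binom{n}{k}}{\binom{1+2k}{k}}\,k^2H_{1+2k} =\frac{2n(4n-1)\{2H_{1+2n}-H_n\}}{(4n^2-1)(2n-3)(2n-5)} -\frac{2n(32n^6+160n^5-544n^4-560n^3+1482n^2-382n-17)}{(4n^2-1)^2(2n-3)^2(2n-5)^2}. \]
   Context: For an integer $m\ge 0$, $H_m$ denotes the $m$-th harmonic number: $H_0=0$ and $H_m=\sum_{j=1}^m \frac1j$ for $m\ge1$. $\binom{n}{k}$ is the usual binomial coefficient. *)

theory Defs
  imports "HOL-Analysis.Analysis"
begin

end

theory Submission
  imports Defs
begin

definition DD :: "real \<Rightarrow> real" where "DD x = (2*x-5)*(2*x-3)*(2*x-1)*(2*x+1)*(2*x+3)*(4*x+3)"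
definition cc0 :: "real \<Rightarrow> real" where "cc0 x = DD x * (2*x-5)"
definition cc1 :: "real \<Rightarrow> real" where "cc1 x = -x*(2*x+3)*(4*x-1)*(2*x-5)*(2*x-3)*(2*x-1)*(2*x+1)*(2*x+3)"
definition PP :: "real \<Rightarrow> real \<Rightarrow> real" where
 "PP x y = ((-180) + x * ((-108) + x * (872 + x * (480 + x * ((-640) + x * ((-192) + x * (128))))))) * y
   + ((-45) + x * (18 + x * (200 + x * ((-80) + x * ((-80) + x * (32)))))) * y^2
   + (495 + x * (342 + x * ((-2416) + x * ((-1520) + x * (1840 + x * (608 + x * ((-384)))))))) * y^3
   + ((-270) + x * ((-252) + x * (1344 + x * (1120 + x * ((-1120) + x * ((-448) + x * (256))))))) * y^4"
definition QN :: "real \<Rightarrow> real \<Rightarrow> real" where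
 "QN x y = (0 + x * ((-612) + x * ((-292) + x * (1488 + x * (1328 + x * (96 + x * ((-64))))))))
   + (462 + x * ((-712) + x * ((-2310) + x * (1244 + x * (2792 + x * (80 + x * ((-320)))))))) * y
   + (1119 + x * (3425 + x * ((-3246) + x * ((-9220) + x * ((-4328) + x * ((-640) + x * ((-64)))))))) * y^2
   + ((-360) + x * (3183 + x * (2000 + x * ((-6416) + x * ((-5904) + x * (80 + x * (832))))))) * y^3
   + ((-1515) + x * ((-3146) + x * (3400 + x * (9984 + x * (6000 + x * (1184 + x * (128))))))) * y^4
   + (78 + x * (328 + x * ((-32) + x * ((-1056) + x * ((-992) + x * ((-1024) + x * ((-512)))))))) * y^5
   + (216 + x * (288 + x * ((-960) + x * ((-1280) + x * (384 + x * (512)))))) * y^6"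
definition QQ :: "real \<Rightarrow> real \<Rightarrow> real" where "QQ x y = QN x y / ((2*y+1)*(y+1))"

definition RR :: "real \<Rightarrow> real \<Rightarrow> real" where
 "RR x e = 2 * x * (4 * x - 1) * e
           / ((4 * x^2 - 1) * (2 * x - 3) * (2 * x - 5))
         - 2 * x * (32 * x^6 + 160 * x^5 - 544 * x^4
             - 560 * x^3 + 1482 * x^2 - 382 * x - 17)
           / ((4 * x^2 - 1)^2 * (2 * x - 3)^2 * (2 * x - 5)^2)"


lemma key_h: "(y+1)*(2*(y+1)+1)*(cc0 x * (x+1-y) * y^2 + cc1 x * y^2) = (-2*(x+1-y)*(y+1+1)) * PP x (y+1) - (y+1)*(2*(y+1)+1) * PP x y"
  unfolding cc0_def cc1_def DD_def PP_def by algebra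

lemma key_c: "-2*(x+1-y)*(y+1+1)*PP x (y+1)*(2*(y+1)+(2*(y+1)+1))*(y+1+1)*(2*y+1) - 2*(x+1-y)*(y+1+1)*QN x (y+1)*2*(y+1)*(2*y+1) - QN x y*2*(y+1)*(2*(y+1)+1)^2*(y+1+1) = 0"
  unfolding PP_def QN_def by algebra

lemma abstr:
  fixes u r w z t A h a b q1 q0 :: real assumes nz: "u \<noteq> 0" "r \<noteq> 0" "w \<noteq> 0" "z \<noteq> 0"
  and kh: "u*r*A = (-2*t*z) * a - u*r * b"
  and kc: "-2*t*z*a*(2*u+r)*z*w - 2*t*z*q1*2*u*w - q0*2*u*r^2*z = 0"
  shows "A * h = (-2*t*z/(u*r)) * (a * (h + 1/(2*u) + 1/r) + q1/(r*z)) - (b * h + q0/(w*u))"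
proof -
  have A: "A = ((-2*t*z) * a - u*r * b) / (u*r)"
    using kh nz by (simp add: nonzero_eq_divide_eq mult.commute)
  have q0: "q0 = (-2*t*z*a*(2*u+r)*z*w - 2*t*z*q1*2*u*w) / (2*u*r^2*z)"
  proof -
    have "q0 * (2*u*r^2*z) = (-2*t*z*a*(2*u+r)*z*w - 2*t*z*q1*2*u*w)" using kc by algebra
    thus ?thesis using nz by (simp add: nonzero_eq_divide_eq)
  qed
  show ?thesis unfolding A q0 using nz
    by (simp add: field_simps) (simp add: algebra_simps power2_eq_square)
qed

lemma rec_closed:
  fixes x e :: real
  assumes "2*x-5 \<noteq> 0" "2*x-3 \<noteq> 0" "2*x-1 \<noteq> 0" "2*x+1 \<noteq> 0" "2*x+3 \<noteq> 0"
  shows "cc0 x*(x+1)*RR x e + cc1 x * RR (x+1) (e + 2/(2*x+3)) = - QN x 0"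
proof -
  have a: "4*x^2-1 = (2*x-1)*(2*x+1)" "4*(x+1)^2-1 = (2*x+1)*(2*x+3)" "2*(x+1)-3 = 2*x-1" "2*(x+1)-5 = 2*x-3"
    by (simp_all add: algebra_simps power2_eq_square)
  have nz: "2*x \<noteq> 5" "2*x \<noteq> 3" "2*x \<noteq> 1" "2*x+1 \<noteq> 0" "2*x+3 \<noteq> 0" using assms by auto
  show ?thesis unfolding RR_def a cc0_def cc1_def DD_def QN_def
    by (simp add: divide_simps nz) algebra
qed

definition U :: "nat \<Rightarrow> nat \<Rightarrow> real" where
  "U n k = (-4::real)^k * (real (n choose k) / real ((1 + 2*k) choose k))"

definition FF :: "nat \<Rightarrow> nat \<Rightarrow> real" where
  "FF n k = (-4::real)^k * (real (n choose k) / real ((1 + 2*k) choose k)) * (real k)^2 * harm (1 + 2*k)"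

definition GG :: "nat \<Rightarrow> nat \<Rightarrow> real" where
  "GG n k = U (Suc n) k * (PP (real n) (real k) * harm (1 + 2*k) + QQ (real n) (real k))"

definition SS :: "nat \<Rightarrow> real" where
  "SS n = (\<Sum>k=0..n. FF n k)"

lemma binom_shift: "real (m choose Suc k) * (real k + 1) = real (m choose k) * (real m - real k)"
proof (cases "k \<le> m")
  case True
  have "Suc k * (m choose Suc k) = (m - k) * (m choose k)"
    using binomial_absorption[of k m] binomial_absorb_comp[of m k] by simp
  hence "real (Suc k * (m choose Suc k)) = real ((m - k) * (m choose k))" by simp
  thus ?thesis using True by (simp add: of_nat_diff algebra_simps)
next
  case False thus ?thesis by (simp add: binomial_eq_0)
qed

lemma central: "real ((1 + 2*Suc k) choose Suc k) * ((real k + 1)*(real k + 2)) = real ((1+2*k) choose k) * ((2*real k + 3)*(2*real k+2))"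
proof -
  have e1: "Suc (2*k+2) * ((2*k+2) choose k) = ((Suc (2*k+2)) choose Suc k) * Suc k" by (rule Suc_times_binomial_eq)
  have e2: "((2*k+2) - k) * ((2*k+2) choose k) = (2*k+2) * ((2*k+2-1) choose k)" by (rule binomial_absorb_comp)
  have f: "1 + 2*Suc k = Suc (2*k+2)" "2*k+2-k = k+2" "2*k+2-1 = 1+2*k" by auto
  have "((1 + 2*Suc k) choose Suc k) * (Suc k * (k+2)) = ((1+2*k) choose k) * ((2*k+3)*(2*k+2))"
  proof -
    have "((1 + 2*Suc k) choose Suc k) * (Suc k * (k+2)) = (((Suc (2*k+2)) choose Suc k) * Suc k) * (k+2)"
      by (simp only: f mult.assoc)
    also have "\<dots> = (2*k+3) * (((2*k+2) - k) * ((2*k+2) choose k))" unfolding e1[symmetric] f by (simp add: algebra_simps)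
    also have "\<dots> = ((1+2*k) choose k) * ((2*k+3)*(2*k+2))" unfolding e2 unfolding f by (simp add: algebra_simps del: binomial_Suc_Suc)
    finally show ?thesis .
  qed
  hence "real (((1 + 2*Suc k) choose Suc k) * (Suc k * (k+2))) = real (((1+2*k) choose k) * ((2*k+3)*(2*k+2)))"
    by (simp only:)
  thus ?thesis by (simp add: algebra_simps)
qed

lemma U_step: "U m (Suc k) * ((real k + 1)*(2*real k + 3)) = -2*(real m - real k)*(real k + 2) * U m k"
proof -
  define c where "c = real (m choose k)"
  define c' where "c' = real (m choose Suc k)"
  define B where "B = real ((1+2*k) choose k)"
  define B' where "B' = real ((1 + 2*Suc k) choose Suc k)"
  define y where "y = real k"
  have B: "B > 0" unfolding B_def by (simp add: zero_less_binomial)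
  have B': "B' > 0" unfolding B'_def by (simp add: zero_less_binomial del: binomial_Suc_Suc)
  have y: "y \<ge> 0" unfolding y_def by simp
  have g1: "c' * (y + 1) = c * (real m - y)"
    using binom_shift[of m k] unfolding c_def[symmetric] c'_def[symmetric] y_def[symmetric] .
  have g2: "B' * ((y+1)*(y+2)) = B * ((2*y+3)*(2*y+2))"
    using central[of k] unfolding B_def[symmetric] B'_def[symmetric] y_def[symmetric] .
  have g3: "B' * (y+2) = 2 * B * (2*y+3)"
  proof -
    have "(y+1) * (B' * (y+2)) = (y+1) * (2 * B * (2*y+3))" using g2 by (simp add: algebra_simps)
    thus ?thesis using y by simp
  qed
  define p where "p = (-4::real)^k"
  define U1 where "U1 = U m (Suc k)"
  define U0 where "U0 = U m k"
  have u1: "U1 * B' = -4 * p * c'" unfolding U1_def U_def c'_def B'_def p_def using B' B'_def by simp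
  have u0: "U0 * B = p * c" unfolding U0_def U_def c_def B_def p_def using B B_def by simp
  have K: "B' * (y+2) * B \<noteq> 0" using B B' y by simp
  have "(U1 * ((y + 1)*(2*y + 3))) * (B' * (y+2) * B) = (-2*(real m - y)*(y + 2) * U0) * (B' * (y+2) * B)"
    using u1 u0 g1 g3 by algebra
  hence "U1 * ((y + 1)*(2*y + 3)) = -2*(real m - y)*(y + 2) * U0" using K by simp
  thus ?thesis unfolding U1_def U0_def y_def .
qed

lemma U_shift: "(real n + 1) * U n k = (real n + 1 - real k) * U (Suc n) k"
proof (cases "k \<le> Suc n")
  case True
  have "(Suc n - k) * (Suc n choose k) = Suc n * (n choose k)"
    using binomial_absorb_comp[of "Suc n" k] by simp
  hence eq: "real (Suc n - k) * real (Suc n choose k) = real (Suc n) * real (n choose k)" by (metis of_nat_mult)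
  have d: "real (Suc n - k) = real n + 1 - real k" using True by (simp add: of_nat_diff)
  have h: "(real n + 1 - real k) * real (Suc n choose k) = (real n + 1) * real (n choose k)"
    using eq unfolding d by simp
  have "(real n + 1) * U n k = (-4)^k * ((real n + 1) * real (n choose k)) / real ((1+2*k) choose k)"
    unfolding U_def by (simp add: ac_simps)
  also have "\<dots> = (-4)^k * ((real n + 1 - real k) * real (Suc n choose k)) / real ((1+2*k) choose k)"
    using h by simp
  also have "\<dots> = (real n + 1 - real k) * U (Suc n) k" unfolding U_def by (simp add: ac_simps)
  finally show ?thesis .
next
  case False thus ?thesis unfolding U_def by (simp add: binomial_eq_0)
qed

lemma harm_step: "(harm (1 + 2*Suc k) :: real) = harm (1+2*k) + 1/(2*(real k+1)) + 1/(2*(real k+1)+1)"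
proof -
  have "1 + 2*Suc k = Suc (Suc (1+2*k))" by simp
  hence "(harm (1 + 2*Suc k) :: real) = harm (1+2*k) + inverse (real (Suc (1+2*k))) + inverse (real (Suc (Suc (1+2*k))))"
    by (simp only: harm_Suc)
  thus ?thesis by (simp add: inverse_eq_divide algebra_simps)
qed


lemma final_comb:
  fixes L cc dd x Uk t V W rho Y h a b h' q1 q0 :: real
  assumes "L = cc*((x+1)*Uk)*Y*h + dd*V*Y*h" "(x+1)*Uk = t*V" "W = rho*V"
    "(cc*t*Y + dd*Y)*h = rho*(a*h' + q1) - (b*h + q0)"
  shows "L = W*(a*h'+q1) - V*(b*h+q0)"
proof -
  have "L = V*((cc*t*Y + dd*Y)*h)" using assms(1,2) by algebra
  also have "\<dots> = V*(rho*(a*h' + q1) - (b*h + q0))" using assms(4) by simp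
  also have "\<dots> = W*(a*h'+q1) - V*(b*h+q0)" using assms(3) by (simp add: algebra_simps)
  finally show ?thesis .
qed

lemma point:
  fixes n k :: nat
  shows "cc0 (real n) * (real n+1) * FF n k + cc1 (real n) * FF (Suc n) k = GG n (Suc k) - GG n k"
proof -
  define x where "x = real n"
  define y where "y = real k"
  define V where "V = U (Suc n) k"
  define W where "W = U (Suc n) (Suc k)"
  define h where "h = (harm (1+2*k) :: real)"
  have y0: "y \<ge> 0" unfolding y_def by simp
  have r1: "(x+1) * U n k = (x+1-y) * V" unfolding x_def y_def V_def by (rule U_shift)
  have r2: "W * ((y+1)*(2*y+3)) = -2*(x+1-y)*(y+1+1) * V"
    using U_step[of "Suc n" k] unfolding W_def V_def x_def y_def by (simp add: algebra_simps)
  have W: "W = (-2*(x+1-y)*(y+1+1)/((y+1)*(2*(y+1)+1))) * V"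
  proof -
    have "(y+1)*(2*(y+1)+1) \<noteq> 0" using y0 by simp
    moreover have "W * ((y+1)*(2*(y+1)+1)) = -2*(x+1-y)*(y+1+1) * V" using r2 by (simp add: algebra_simps)
    ultimately show ?thesis by (simp add: nonzero_eq_divide_eq)
  qed
  have hs: "harm (1+2*Suc k) = h + 1/(2*(y+1)) + 1/(2*(y+1)+1)" unfolding h_def y_def by (rule harm_step)
  have Fn: "FF n k = U n k * y^2 * h" unfolding FF_def U_def y_def h_def by simp
  have Fs: "FF (Suc n) k = V * y^2 * h" unfolding FF_def U_def V_def y_def h_def by simp
  have G0: "GG n k = V * (PP x y * h + QQ x y)" unfolding GG_def V_def x_def y_def h_def ..
  have ry: "real (Suc k) = y + 1" unfolding y_def by simp
  have G1: "GG n (Suc k) = W * (PP x (y+1) * harm (1+2*Suc k) + QQ x (y+1))"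
    unfolding GG_def W_def x_def ry ..
  have q1: "QQ x (y+1) = QN x (y+1) / ((2*(y+1)+1)*(y+1+1))" by (rule QQ_def)
  have q0: "QQ x y = QN x y / ((2*y+1)*(y+1))" by (rule QQ_def)
  have ab: "(cc0 x*(x+1-y)*y^2 + cc1 x*y^2) * h = (-2*(x+1-y)*(y+1+1)/((y+1)*(2*(y+1)+1))) *
      (PP x (y+1) * (h + 1/(2*(y+1)) + 1/(2*(y+1)+1)) + QN x (y+1)/((2*(y+1)+1)*(y+1+1))) -
      (PP x y * h + QN x y/((2*y+1)*(y+1)))"
    by (rule abstr[OF _ _ _ _ key_h key_c]) (use y0 in simp_all)
  show ?thesis unfolding x_def[symmetric] G0 G1 hs q1 q0
    apply (rule final_comb[where Uk="U n k" and t="x+1-y" and Y="y^2" and cc="cc0 x" and dd="cc1 x"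
          and rho="-2*(x+1-y)*(y+1+1)/((y+1)*(2*(y+1)+1))"])
       apply (simp only: Fn Fs mult.assoc)
      apply (rule r1)
     apply (rule W)
    apply (rule ab)
    done
qed

lemma rec: "cc0 (real n) * (real n + 1) * SS n + cc1 (real n) * SS (Suc n) = - QN (real n) 0"
proof -
  have "(\<Sum>k<Suc (Suc n). cc0 (real n) * (real n+1) * FF n k + cc1 (real n) * FF (Suc n) k)
        = (\<Sum>k<Suc (Suc n). GG n (Suc k) - GG n k)"
    by (rule sum.cong) (simp_all add: point)
  also have "\<dots> = GG n (Suc (Suc n)) - GG n 0" by (rule sum_lessThan_telescope)
  also have "GG n (Suc (Suc n)) = 0"
  proof -
    have z: "Suc n choose Suc (Suc n) = 0" by (simp add: binomial_eq_0 del: binomial_Suc_Suc)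
    show ?thesis unfolding GG_def U_def z by simp
  qed
  also have "GG n 0 = QN (real n) 0" unfolding GG_def U_def PP_def QQ_def by simp
  finally have *: "(\<Sum>k<Suc (Suc n). cc0 (real n) * (real n+1) * FF n k + cc1 (real n) * FF (Suc n) k) = - QN (real n) 0"
    by simp
  have s1: "(\<Sum>k<Suc (Suc n). FF n k) = SS n"
  proof -
    have "FF n (Suc n) = 0" unfolding FF_def by simp
    hence "(\<Sum>k<Suc (Suc n). FF n k) = (\<Sum>k<Suc n. FF n k)" by simp
    also have "\<dots> = SS n" unfolding SS_def atLeast0AtMost lessThan_Suc_atMost ..
    finally show ?thesis .
  qed
  have s2: "(\<Sum>k<Suc (Suc n). FF (Suc n) k) = SS (Suc n)"
    unfolding SS_def atLeast0AtMost lessThan_Suc_atMost ..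
  show ?thesis using * unfolding sum.distrib sum_distrib_left[symmetric] s1 s2 .
qed

lemma nat_half_ne: "2 * real n - real (m::nat) \<noteq> 0" if "odd m"
proof
  assume "2 * real n - real m = 0"
  hence "real (2*n) = real m" by simp
  hence "2*n = m" by (simp only: of_nat_eq_iff)
  thus False using that by auto
qed

lemma EE_step: "2 * harm (1+2*Suc n) - harm (Suc n) = (2*harm(1+2*n) - harm n) + 2/(2*real n+3 :: real)"
proof -
  have a: "(harm (1+2*Suc n) :: real) = harm (1+2*n) + 1/(2*(real n+1)) + 1/(2*(real n+1)+1)" by (rule harm_step)
  have b: "(harm (Suc n) :: real) = harm n + 1/(real n + 1)" by (simp add: harm_Suc inverse_eq_divide add.commute)
  have c: "2*(real n+1)+1 = 2*real n+3" by simp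
  have pos: "real n + 1 > 0" by simp
  have d: "2*(1/(2*(real n+1))) = 1/(real n+1)" using pos by (simp add: field_simps)
  show ?thesis unfolding a b c using d by (simp add: algebra_simps)
qed

lemma main: "SS n = RR (real n) (2*harm(1+2*n) - harm n)"
proof (cases n)
  case 0
  thus ?thesis unfolding SS_def FF_def RR_def by simp
next
  case (Suc m)
  have "SS (Suc m) = RR (real (Suc m)) (2*harm(1+2*Suc m) - harm (Suc m))"
  proof (induction m)
    case 0
    have h3: "(harm 3 :: real) = 11/6" by (simp add: harm_def eval_nat_numeral)
    have h0: "(harm 0 :: real) = 0" by (simp add: harm_def)
    have "SS (Suc 0) = -4/3 * harm 3" unfolding SS_def FF_def by (simp add: eval_nat_numeral)
    also have "\<dots> = RR (real (Suc 0)) (2*harm(1+2*Suc 0) - harm (Suc 0))"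
      unfolding RR_def h3 by (simp add: eval_nat_numeral harm_Suc h0)
    finally show ?case .
  next
    case (Suc m)
    define n where "n = Suc m"
    define x where "x = real n"
    define e where "e = (2*harm(1+2*n) - harm n :: real)"
    have IH: "SS n = RR x e" using Suc.IH unfolding n_def x_def e_def .
    have x1: "x \<ge> 1" unfolding x_def n_def by simp
    have nz: "2*x-5 \<noteq> 0" "2*x-3 \<noteq> 0" "2*x-1 \<noteq> 0" "2*x+1 \<noteq> 0" "2*x+3 \<noteq> 0"
      using nat_half_ne[of 5 n] nat_half_ne[of 3 n] nat_half_ne[of 1 n] x1 unfolding x_def by auto
    have c1: "cc1 x \<noteq> 0" unfolding cc1_def using nz x1 by simp
    have r: "cc0 x * (x + 1) * SS n + cc1 x * SS (Suc n) = - QN x 0" unfolding x_def by (rule rec)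
    have rc: "cc0 x*(x+1)*RR x e + cc1 x * RR (x+1) (e + 2/(2*x+3)) = - QN x 0" by (rule rec_closed[OF nz])
    have "cc0 x * (x + 1) * SS n = cc0 x*(x+1)*RR x e" using IH by simp
    hence "cc1 x * SS (Suc n) = cc1 x * RR (x+1) (e + 2/(2*x+3))" using r rc by linarith
    hence "SS (Suc n) = RR (x+1) (e + 2/(2*x+3))" using c1 by simp
    moreover have "real (Suc n) = x + 1" unfolding x_def by simp
    moreover have "2*harm(1+2*Suc n) - harm (Suc n) = e + 2/(2*x+3)" unfolding e_def x_def by (rule EE_step)
    ultimately show ?case unfolding n_def by (simp add: add.commute)
  qed
  thus ?thesis using Suc by simp
qed

theorem theorem6:
  fixes n :: nat
  shows "(\<Sum>k=0..n. (-4::real)^k * (real (n choose k) / real ((1 + 2*k) choose k))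
            * (real k)^2 * harm (1 + 2*k))
       = 2 * real n * (4 * real n - 1) * (2 * harm (1 + 2*n) - harm n)
           / ((4 * (real n)^2 - 1) * (2 * real n - 3) * (2 * real n - 5))
         - 2 * real n * (32 * (real n)^6 + 160 * (real n)^5 - 544 * (real n)^4
             - 560 * (real n)^3 + 1482 * (real n)^2 - 382 * real n - 17)
           / ((4 * (real n)^2 - 1)^2 * (2 * real n - 3)^2 * (2 * real n - 5)^2)"
  using main[of n] unfolding SS_def FF_def RR_def .

end
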